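(* Let $n \geq 3$, let $\Omega = \bigcap_{m=0}^q \{u_m \leq 0\} \subset \mathbb{R}^n$ be a compact convex polytope with non-empty interior, and let $g$ be a Riemannian metric on $\mathbb{R}^n$, all satisfying the standing assumptions described in the context. Then for every $\varepsilon \in (0,1)$ there exists $\delta > 0$ with the following property: if $0 \leq j < k \leq q$ and $x \in \Omega$ satisfies $-\delta \leq u_j(x) \leq 0$ and $-\delta \leq u_k(x) \leq 0$, then $\langle \nu_j, \nu_k \rangle - \varepsilon \leq \langle N_j, N_k \rangle$ at $x$.
   Context: $u_0,\dots,u_q$ are non-constant linear (affine) functions on $\mathbb{R}^n$, $\Omega=\bigcap_{m=0}^q\{u_m\le0\}$ compact convex with non-empty interior. Standing assumptions: (a) for each $k$, $\{u_k>0\}\cap\bigcap_{m\neq k}\{u_m\le0\}\neq\emptyset$; (b) the Euclidean gradient of each $u_k$ is a unit vector $N_k\in S^{n-1}$; (c) for $j<k$, if some $x\in\Omega$ has $u_j(x)=u_k(x)=0$ then $\langle N_j,N_k\rangle\le0$ (Euclidean); (d) $\nu_k=\nabla u_k/|\nabla u_k|$ is the unit normal to level sets of $u_k$ computed with respect to $g$, and for $j<k$, if $x\in\Omega$ with $u_j(x)=u_k(x)=0$, then $\langle\nu_j,\nu_k\rangle\le\langle N_j,N_k\rangle$ at $x$, where $\langle\nu_j,\nu_k\rangle$ is the $g$-inner product and $\langle N_j,N_k\rangle$ the Euclidean one. *)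

theory Defs
  imports "HOL-Analysis.Analysis"
begin

fun Ck :: "nat \<Rightarrow> (real^'n \<Rightarrow> real) \<Rightarrow> bool" where
  "Ck 0 f = continuous_on UNIV f"
| "Ck (Suc k) f = (\<exists>D :: real^'n \<Rightarrow> real^'n.
      (\<forall>x. (f has_derivative (\<lambda>h. D x \<bullet> h)) (at x)) \<and> (\<forall>i. Ck k (\<lambda>x. D x $ i)))"

definition smooth_fun :: "(real^'n \<Rightarrow> real) \<Rightarrow> bool" where
  "smooth_fun f \<longleftrightarrow> (\<forall>k. Ck k f)"

definition riemannian_metric :: "(real^'n \<Rightarrow> real^'n^'n) \<Rightarrow> bool" where
  "riemannian_metric g \<longleftrightarrow>
     (\<forall>i j. smooth_fun (\<lambda>x. g x $ i $ j)) \<and>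
     (\<forall>x. transpose (g x) = g x) \<and>
     (\<forall>x v. v \<noteq> 0 \<longrightarrow> v \<bullet> (g x *v v) > 0)"

definition ginner :: "(real^'n \<Rightarrow> real^'n^'n) \<Rightarrow> real^'n \<Rightarrow> real^'n \<Rightarrow> real^'n \<Rightarrow> real" where
  "ginner g x v w = v \<bullet> (g x *v w)"

text \<open>g-gradient at x of an affine function with Euclidean gradient N: g(x)^{-1} N.\<close>
definition ggrad :: "(real^'n \<Rightarrow> real^'n^'n) \<Rightarrow> real^'n \<Rightarrow> real^'n \<Rightarrow> real^'n" where
  "ggrad g x N = matrix_inv (g x) *v N"

text \<open>Unit normal nu = grad_g u / |grad_g u|_g to the level sets, w.r.t. g.\<close>
definition gnormal :: "(real^'n \<Rightarrow> real^'n^'n) \<Rightarrow> real^'n \<Rightarrow> real^'n \<Rightarrow> real^'n" where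
  "gnormal g x N = (1 / sqrt (ginner g x (ggrad g x N) (ggrad g x N))) *\<^sub>R ggrad g x N"

end

theory Submission
  imports Defs
begin

lemma metric_cont: "riemannian_metric g \<Longrightarrow> continuous_on UNIV (\<lambda>x. g x $ i $ j)"
  unfolding riemannian_metric_def smooth_fun_def by (metis Ck.simps(1))

lemma det_cont:
  fixes A :: "'a::topological_space \<Rightarrow> real^'n^'n"
  assumes "\<And>i j. continuous_on S (\<lambda>x. A x $ i $ j)"
  shows "continuous_on S (\<lambda>x. det (A x))"
  unfolding det_def
  by (intro continuous_intros assms)

lemma ginner_cont:
  fixes A :: "'a::topological_space \<Rightarrow> real^'n^'n"
  assumes "\<And>i j. continuous_on S (\<lambda>x. A x $ i $ j)"
    and "continuous_on S v" "continuous_on S w"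
  shows "continuous_on S (\<lambda>x. v x \<bullet> (A x *v w x))"
  unfolding inner_vec_def matrix_vector_mult_def
  by (simp, intro continuous_intros assms)

lemma metric_det:
  assumes "riemannian_metric g" shows "det (g x) \<noteq> 0"
proof -
  have "\<And>v. g x *v v = 0 \<Longrightarrow> v = 0"
  proof -
    fix v assume "g x *v v = 0"
    then have "\<not> v \<bullet> (g x *v v) > 0" by simp
    then show "v = 0" using assms unfolding riemannian_metric_def by blast
  qed
  then have "invertible (g x)"
    using invertible_left_inverse matrix_left_invertible_ker by blast
  then show ?thesis by (simp add: invertible_det_nz)
qed

lemma ggrad_eq:
  assumes "riemannian_metric g"
  shows "g x *v ggrad g x N = N"
proof -
  have d: "det (g x) \<noteq> 0" using metric_det[OF assms] .
  then have "invertible (g x)" by (simp add: invertible_det_nz)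
  then have "g x ** matrix_inv (g x) = mat 1"
    unfolding invertible_def matrix_inv_def by (rule someI_ex[THEN conjunct1])
  then show "g x *v ggrad g x N = N"
    unfolding ggrad_def by (metis matrix_vector_mul_assoc matrix_vector_mul_lid)
qed

lemma ggrad_cramer:
  assumes "riemannian_metric g"
  shows "ggrad g x N = (\<chi> k. det(\<chi> i j. if j=k then N$i else g x$i$j) / det (g x))"
  using cramer[OF metric_det[OF assms]] ggrad_eq[OF assms] by blast

lemma ggrad_cont:
  assumes "riemannian_metric g"
  shows "continuous_on UNIV (\<lambda>x. ggrad g x N)"
proof -
  have e: "continuous_on UNIV (\<lambda>x. (\<chi> i j. if j=k then N$i else g x$i$j) $ a $ b)" for k a b
    by (cases "b = k") (auto intro: metric_cont[OF assms])
  have "continuous_on UNIV (\<lambda>x. (\<chi> k. det(\<chi> i j. if j=k then N$i else g x$i$j) / det (g x)))"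
    apply (intro continuous_on_vec_lambda continuous_on_divide det_cont e metric_cont[OF assms])
    using metric_det[OF assms] by auto
  then show ?thesis by (simp add: ggrad_cramer[OF assms])
qed

lemma ginner_pos:
  assumes "riemannian_metric g" "v \<noteq> 0"
  shows "ginner g x v v > 0"
  using assms unfolding riemannian_metric_def ginner_def by blast

lemma ggrad_nz:
  assumes "riemannian_metric g" "N \<noteq> 0"
  shows "ggrad g x N \<noteq> 0"
  using ggrad_eq[OF assms(1), of x N] assms(2) by auto

lemma gnormal_cont:
  assumes "riemannian_metric g" "a \<noteq> 0"
  shows "continuous_on UNIV (\<lambda>x. gnormal g x a)"
proof -
  have c: "continuous_on UNIV (\<lambda>x. ginner g x (ggrad g x a) (ggrad g x a))"
    unfolding ginner_def
    by (intro ginner_cont metric_cont[OF assms(1)] ggrad_cont[OF assms(1)])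
  show ?thesis
    unfolding gnormal_def
    apply (intro continuous_intros c ggrad_cont[OF assms(1)])
    using ginner_pos[OF assms(1) ggrad_nz[OF assms]] by (metis real_sqrt_eq_zero_cancel_iff less_irrefl)
qed

lemma F_cont:
  assumes "riemannian_metric g" "a \<noteq> 0" "b \<noteq> 0"
  shows "continuous_on UNIV (\<lambda>x. ginner g x (gnormal g x a) (gnormal g x b))"
  unfolding ginner_def
  by (intro ginner_cont metric_cont[OF assms(1)] gnormal_cont assms)

lemma compact_delta:
  fixes S :: "'a::metric_space set" and F h :: "'a \<Rightarrow> real"
  assumes "compact S" "continuous_on S F" "continuous_on S h"
    and "\<And>x. x \<in> S \<Longrightarrow> h x = 0 \<Longrightarrow> F x \<le> 0"
    and "\<And>x. x \<in> S \<Longrightarrow> h x \<ge> 0"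
    and "e > 0"
  shows "\<exists>d>0. \<forall>x\<in>S. h x \<le> d \<longrightarrow> F x \<le> e"
proof -
  define K where "K = S \<inter> F -` {e..}"
  have "closed K" unfolding K_def
    using continuous_closed_preimage[OF assms(2) compact_imp_closed[OF assms(1)] closed_atLeast] .
  moreover have "S \<inter> K = K" unfolding K_def by blast
  ultimately have K: "compact K" using compact_Int_closed[OF assms(1), of K] by simp
  show ?thesis
  proof (cases "K = {}")
    case True
    have "\<forall>x\<in>S. h x \<le> 1 \<longrightarrow> F x \<le> e"
    proof (intro ballI impI)
      fix x assume "x \<in> S"
      then show "F x \<le> e" using True unfolding K_def by (auto simp: not_le)
    qed
    then show ?thesis by (intro exI[of _ 1]) simp
  next
    case False
    have "K \<subseteq> S" unfolding K_def by blast
    then have "continuous_on K h" using assms(3) by (rule continuous_on_subset[rotated])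
    then obtain y where y: "y \<in> K" "\<And>z. z \<in> K \<Longrightarrow> h y \<le> h z"
      using continuous_attains_inf[OF K False] by blast
    have yS: "y \<in> S" and Fy: "F y \<ge> e" using y(1) unfolding K_def by auto
    have "h y \<noteq> 0"
    proof
      assume "h y = 0"
      then have "F y \<le> 0" using assms(4) yS by blast
      then show False using Fy assms(6) by linarith
    qed
    then have hy: "h y > 0" using assms(5)[OF yS] by linarith
    show ?thesis
    proof (intro exI[of _ "h y / 2"] conjI ballI impI)
      show "h y / 2 > 0" using hy by simp
      fix x assume xS: "x \<in> S" and hx: "h x \<le> h y / 2"
      show "F x \<le> e"
      proof (rule ccontr)
        assume "\<not> F x \<le> e"
        then have "x \<in> K" unfolding K_def using xS by auto
        then have "h y \<le> h x" by (rule y(2))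
        then show False using hx hy by linarith
      qed
    qed
  qed
qed

theorem lemma4p2:
  fixes u :: "nat \<Rightarrow> real^'n \<Rightarrow> real"
    and N :: "nat \<Rightarrow> real^'n"
    and c :: "nat \<Rightarrow> real"
    and q :: nat
    and g :: "real^'n \<Rightarrow> real^'n^'n"
    and \<Omega> :: "(real^'n) set"
  assumes dim: "CARD('n) \<ge> 3"
    and affine_u: "\<forall>k\<le>q. \<forall>x. u k x = N k \<bullet> x + c k"
    and unit_N: "\<forall>k\<le>q. norm (N k) = 1"
    and Omega_def: "\<Omega> = {x. \<forall>m\<le>q. u m x \<le> 0}"
    and compact: "compact \<Omega>"
    and convex: "convex \<Omega>"
    and interior: "interior \<Omega> \<noteq> {}"
    and metric: "riemannian_metric g"
    and a: "\<forall>k\<le>q. \<exists>x. u k x > 0 \<and> (\<forall>m\<le>q. m \<noteq> k \<longrightarrow> u m x \<le> 0)"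
    and c_cond: "\<forall>j k x. j < k \<and> k \<le> q \<and> x \<in> \<Omega> \<and> u j x = 0 \<and> u k x = 0
                   \<longrightarrow> N j \<bullet> N k \<le> 0"
    and d_cond: "\<forall>j k x. j < k \<and> k \<le> q \<and> x \<in> \<Omega> \<and> u j x = 0 \<and> u k x = 0
                   \<longrightarrow> ginner g x (gnormal g x (N j)) (gnormal g x (N k)) \<le> N j \<bullet> N k"
  shows "\<forall>\<epsilon>. 0 < \<epsilon> \<and> \<epsilon> < 1 \<longrightarrow> (\<exists>\<delta>>0. \<forall>j k x.
           j < k \<and> k \<le> q \<and> x \<in> \<Omega> \<and>
           -\<delta> \<le> u j x \<and> u j x \<le> 0 \<and> -\<delta> \<le> u k x \<and> u k x \<le> 0
           \<longrightarrow> ginner g x (gnormal g x (N j)) (gnormal g x (N k)) - \<epsilon> \<le> N j \<bullet> N k)"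
proof (intro allI impI)
  fix \<epsilon> :: real assume eps: "0 < \<epsilon> \<and> \<epsilon> < 1"
  have pair: "\<exists>d>0. \<forall>x\<in>\<Omega>. max \<bar>u j x\<bar> \<bar>u k x\<bar> \<le> d \<longrightarrow>
      ginner g x (gnormal g x (N j)) (gnormal g x (N k)) - N j \<bullet> N k \<le> \<epsilon>"
    if jk: "j < k" "k \<le> q" for j k
  proof -
    have Nj: "N j \<noteq> 0" and Nk: "N k \<noteq> 0" using unit_N jk by (metis less_imp_le_nat order.trans norm_zero zero_neq_one)+
    have uj: "u j = (\<lambda>x. N j \<bullet> x + c j)" and uk: "u k = (\<lambda>x. N k \<bullet> x + c k)"
      using affine_u jk by auto
    have hc: "continuous_on \<Omega> (\<lambda>x. max \<bar>u j x\<bar> \<bar>u k x\<bar>)"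
      unfolding uj uk by (intro continuous_intros)
    have Fc: "continuous_on \<Omega> (\<lambda>x. ginner g x (gnormal g x (N j)) (gnormal g x (N k)) - N j \<bullet> N k)"
      by (intro continuous_intros continuous_on_subset[OF F_cont[OF metric Nj Nk]]) simp
    show ?thesis
    proof (rule compact_delta[OF compact Fc hc])
      fix x assume "x \<in> \<Omega>" "max \<bar>u j x\<bar> \<bar>u k x\<bar> = 0"
      then show "ginner g x (gnormal g x (N j)) (gnormal g x (N k)) - N j \<bullet> N k \<le> 0"
        using d_cond jk by (smt (verit))
    qed (use eps in auto)
  qed
  then obtain d where d: "\<And>j k. j < k \<Longrightarrow> k \<le> q \<Longrightarrow> d j k > 0 \<and> (\<forall>x\<in>\<Omega>. max \<bar>u j x\<bar> \<bar>u k x\<bar> \<le> d j k \<longrightarrow>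
      ginner g x (gnormal g x (N j)) (gnormal g x (N k)) - N j \<bullet> N k \<le> \<epsilon>)"
    by metis
  define P where "P = {(j, k). j < k \<and> k \<le> q}"
  have finP: "finite P"
    by (rule finite_subset[of _ "{..q} \<times> {..q}"]) (auto simp: P_def)
  define \<delta> where "\<delta> = Min (insert 1 ((\<lambda>(j, k). d j k) ` P))"
  have dpos: "\<delta> > 0" unfolding \<delta>_def using finP d by (auto simp: P_def)
  have dle: "\<delta> \<le> d j k" if "j < k" "k \<le> q" for j k
  proof -
    have "d j k \<in> insert 1 ((\<lambda>(j, k). d j k) ` P)" using that unfolding P_def by force
    then show ?thesis unfolding \<delta>_def using finP by simp
  qed
  show "\<exists>\<delta>>0. \<forall>j k x.
           j < k \<and> k \<le> q \<and> x \<in> \<Omega> \<and>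
           -\<delta> \<le> u j x \<and> u j x \<le> 0 \<and> -\<delta> \<le> u k x \<and> u k x \<le> 0
           \<longrightarrow> ginner g x (gnormal g x (N j)) (gnormal g x (N k)) - \<epsilon> \<le> N j \<bullet> N k"
  proof (intro exI[of _ \<delta>] conjI allI impI dpos)
    fix j k x assume H: "j < k \<and> k \<le> q \<and> x \<in> \<Omega> \<and>
           -\<delta> \<le> u j x \<and> u j x \<le> 0 \<and> -\<delta> \<le> u k x \<and> u k x \<le> 0"
    then have "max \<bar>u j x\<bar> \<bar>u k x\<bar> \<le> d j k" using dle[of j k] by auto
    then show "ginner g x (gnormal g x (N j)) (gnormal g x (N k)) - \<epsilon> \<le> N j \<bullet> N k"
      using d[of j k] H by auto
  qed
qed

end
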